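(* Let $R$ be an integral domain with $R\neq K_R$. Assume there is a non-trivial real-valued additive valuation $\nu$ of $K_R$ with $\nu(r)\ge0$ for all $r\in R$. Then $K_R$, as an $R$-algebra, is not strongly simple.
   Context: $K_R$ is the field of fractions of $R$. An $R$-submodule $M$ of an $R$-algebra $\mathcal A$ is a (two-sided) Mathieu subspace if whenever $a\in\mathcal A$ satisfies $a^m\in M$ for all $m\ge1$, then for all $b,c\in\mathcal A$ there is $N$ with $ba^mc\in M$ for all $m\ge N$. $\mathcal A$ is strongly simple if its only Mathieu subspaces are $0$ and $\mathcal A$. A non-trivial real-valued additive valuation is a map $\nu:K_R^\times\to\mathbb R$ (extended by $\nu(0)=\infty$) with $\nu(xy)=\nu(x)+\nu(y)$, $\nu(x+y)\ge\min(\nu(x),\nu(y))$, not identically zero on $K_R^\times$. *)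

theory Defs
  imports "HOL-Computational_Algebra.Polynomial_Factorial"
begin

text \<open>R is modelled as the type 'a :: idom; its field of fractions K_R is 'a fract,
  with R embedded via to_fract (x = Fract x 1). The R-algebra structure on K_R is
  r . q = to_fract r * q.\<close>

definition R_submodule :: "('a::idom) fract set \<Rightarrow> bool" where
  "R_submodule M \<longleftrightarrow> 0 \<in> M \<and> (\<forall>x\<in>M. \<forall>y\<in>M. x + y \<in> M)
     \<and> (\<forall>r::'a. \<forall>x\<in>M. to_fract r * x \<in> M)"

definition mathieu_subspace :: "('a::idom) fract set \<Rightarrow> bool" where
  "mathieu_subspace M \<longleftrightarrow> R_submodule M \<and>
     (\<forall>a. (\<forall>m::nat. m \<ge> 1 \<longrightarrow> a ^ m \<in> M) \<longrightarrow>
        (\<forall>b c. \<exists>N. \<forall>m\<ge>N. b * a ^ m * c \<in> M))"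

definition strongly_simple_fract :: "'a::idom itself \<Rightarrow> bool" where
  "strongly_simple_fract _ \<longleftrightarrow>
     (\<forall>M :: 'a fract set. mathieu_subspace M \<longrightarrow> M = {0} \<or> M = UNIV)"

text \<open>A non-trivial real-valued additive valuation of K_R, given by its values on
  nonzero elements (nu 0 = infinity is implicit: conditions only involve nonzero arguments).\<close>

definition nontrivial_valuation :: "(('a::idom) fract \<Rightarrow> real) \<Rightarrow> bool" where
  "nontrivial_valuation \<nu> \<longleftrightarrow>
     (\<forall>x y. x \<noteq> 0 \<longrightarrow> y \<noteq> 0 \<longrightarrow> \<nu> (x * y) = \<nu> x + \<nu> y)
   \<and> (\<forall>x y. x \<noteq> 0 \<longrightarrow> y \<noteq> 0 \<longrightarrow> x + y \<noteq> 0 \<longrightarrow> \<nu> (x + y) \<ge> min (\<nu> x) (\<nu> y))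
   \<and> (\<exists>x. x \<noteq> 0 \<and> \<nu> x \<noteq> 0)"

end

theory Submission
  imports Defs
begin

theorem lemma6p6:
  fixes \<nu> :: "('a::idom) fract \<Rightarrow> real"
  assumes "\<not> surj (to_fract :: 'a \<Rightarrow> 'a fract)"
    and "nontrivial_valuation \<nu>"
    and "\<forall>r::'a. r \<noteq> 0 \<longrightarrow> \<nu> (to_fract r) \<ge> 0"
  shows "\<not> strongly_simple_fract TYPE('a)"
proof
  assume ss: "strongly_simple_fract TYPE('a)"
  have mul: "\<And>x y. x \<noteq> 0 \<Longrightarrow> y \<noteq> 0 \<Longrightarrow> \<nu> (x * y) = \<nu> x + \<nu> y"
    and add: "\<And>x y. x \<noteq> 0 \<Longrightarrow> y \<noteq> 0 \<Longrightarrow> x + y \<noteq> 0 \<Longrightarrow> \<nu> (x + y) \<ge> min (\<nu> x) (\<nu> y)"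
    and nt: "\<exists>x. x \<noteq> 0 \<and> \<nu> x \<noteq> 0"
    using assms(2) unfolding nontrivial_valuation_def by blast+
  have v1: "\<nu> 1 = 0" using mul[of 1 1] by simp
  have pw: "\<And>a m. a \<noteq> 0 \<Longrightarrow> \<nu> (a ^ m) = real m * \<nu> a"
  proof -
    fix a :: "'a fract" and m :: nat assume a: "a \<noteq> 0"
    show "\<nu> (a ^ m) = real m * \<nu> a"
      by (induction m) (simp_all add: v1 mul a algebra_simps)
  qed
  define M where "M = {x :: 'a fract. x = 0 \<or> \<nu> x > 0}"
  have sub: "R_submodule M"
    unfolding R_submodule_def M_def
  proof (intro conjI ballI allI)
    show "0 \<in> {x :: 'a fract. x = 0 \<or> \<nu> x > 0}" by simp
  next
    fix x y assume x: "x \<in> {x :: 'a fract. x = 0 \<or> \<nu> x > 0}"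
      and y: "y \<in> {x :: 'a fract. x = 0 \<or> \<nu> x > 0}"
    show "x + y \<in> {x. x = 0 \<or> 0 < \<nu> x}"
    proof (cases "x = 0 \<or> y = 0 \<or> x + y = 0")
      case True then show ?thesis using x y by auto
    next
      case False
      then have "\<nu> (x + y) \<ge> min (\<nu> x) (\<nu> y)" using add by blast
      then show ?thesis using x y False by auto
    qed
  next
    fix r :: 'a and x assume x: "x \<in> {x :: 'a fract. x = 0 \<or> \<nu> x > 0}"
    show "to_fract r * x \<in> {x. x = 0 \<or> 0 < \<nu> x}"
    proof (cases "r = 0 \<or> x = 0")
      case True then show ?thesis by auto
    next
      case False
      then have "to_fract r \<noteq> 0" by simp
      then have "\<nu> (to_fract r * x) = \<nu> (to_fract r) + \<nu> x" using mul False by blast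
      then show ?thesis using x False assms(3) by force
    qed
  qed
  have ms: "mathieu_subspace M"
    unfolding mathieu_subspace_def
  proof (intro conjI sub allI impI)
    fix a b c :: "'a fract" assume h: "\<forall>m::nat. m \<ge> 1 \<longrightarrow> a ^ m \<in> M"
    then have aM: "a \<in> M" using h[rule_format, of 1] by simp
    show "\<exists>N. \<forall>m\<ge>N. b * a ^ m * c \<in> M"
    proof (cases "a = 0 \<or> b = 0 \<or> c = 0")
      case True
      then have "\<forall>m\<ge>1. b * a ^ m * c \<in> M" by (auto simp: M_def)
      then show ?thesis by blast
    next
      case False
      then have va: "\<nu> a > 0" using aM by (auto simp: M_def)
      obtain N :: nat where N: "- (\<nu> b + \<nu> c) < real N * \<nu> a"
        using reals_Archimedean3[OF va] by blast
      have "\<forall>m\<ge>N. b * a ^ m * c \<in> M"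
      proof (intro allI impI)
        fix m assume m: "m \<ge> N"
        have am: "a ^ m \<noteq> 0" using False by simp
        have "\<nu> (b * a ^ m * c) = \<nu> b + real m * \<nu> a + \<nu> c"
          using mul[of "b * a ^ m" c] mul[of b "a ^ m"] pw[of a m] False am by simp
        moreover have "real N * \<nu> a \<le> real m * \<nu> a"
          using m va by (simp add: mult_right_mono)
        ultimately show "b * a ^ m * c \<in> M" using N by (simp add: M_def)
      qed
      then show ?thesis by blast
    qed
  qed
  have "M = {0} \<or> M = UNIV" using ss ms unfolding strongly_simple_fract_def by blast
  moreover have "1 \<notin> M" using v1 by (simp add: M_def)
  moreover have "M \<noteq> {0}"
  proof -
    obtain x :: "'a fract" where x: "x \<noteq> 0" "\<nu> x \<noteq> 0" using nt by blast
    have "\<nu> x + \<nu> (inverse x) = 0" using mul[of x "inverse x"] x v1 by simp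
    then have "x \<in> M \<or> inverse x \<in> M" using x by (auto simp: M_def)
    moreover have "inverse x \<noteq> 0" using x by simp
    ultimately show ?thesis using x by auto
  qed
  ultimately show False by auto
qed

end
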